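(* Let $n\ge2$, $\nu_1,\ldots,\nu_n>0$, and $(j_1,\ldots,j_{n-1})$ nonnegative integers. Then \[ \psi^{BG}_{j_1,\ldots,j_{n-1}}=\prod_{k=1}^{n-1}(-1)^{j_k}\,j_k!\,\frac{\Gamma(2\nu_{k+1})}{\Gamma(2\nu_{k+1}+j_k)}\Big(L_+^{[k+1]}\Big)^{j_k}P^{(\alpha_k,\beta_k)}_{j_k}\!\left(\frac{x_{k+1}-L_+^{[k]}}{L_+^{[k+1]}}\right), \] where $\alpha_k=2\sum_{i=1}^k\nu_i-1+2\sum_{\ell=1}^{k-1}j_\ell$ and $\beta_k=2\nu_{k+1}-1$ (each factor being a polynomial).
   Context: $L_+^{[m]}=\sum_{i=1}^m x_i$ and $L_-^{[m]}=\sum_{i=1}^m\big(x_i\partial_{x_i}^2+2\nu_i\partial_{x_i}\big)$. For $2\le m\le n$ and a homogeneous polynomial $p$ of degree $d$ in $x_1,\ldots,x_{m-1}$, $CK_m^{BG}(p)=\Gamma(2\nu_m)\sum_{j=0}^d\frac{(-x_mL_-^{[m-1]})^j}{j!\,\Gamma(j+2\nu_m)}p$. Define $\psi^{BG}_{j_1,\ldots,j_{n-1}}=CK_n^{BG}\big((L_+^{[n-1]})^{j_{n-1}}CK_{n-1}^{BG}(\cdots(L_+^{[2]})^{j_2}CK_2^{BG}(x_1^{j_1})\cdots)\big)$. The Jacobi polynomial is $P_m^{(\alpha,\beta)}(x)=\sum_{s=0}^m\binom{m+\alpha}{s}\binom{m+\beta}{m-s}\left(\frac{x-1}{2}\right)^{m-s}\left(\frac{x+1}{2}\right)^s$.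 *)

theory Defs
  imports "HOL-Analysis.Analysis"
begin

text \<open>Polynomials in the variables x_1, x_2, ... are represented as real functions of
  a point x :: nat => real (coordinate i is x i). Partial derivative in coordinate i:\<close>

definition pd :: "nat \<Rightarrow> ((nat \<Rightarrow> real) \<Rightarrow> real) \<Rightarrow> (nat \<Rightarrow> real) \<Rightarrow> real" where
  "pd i f = (\<lambda>x. deriv (\<lambda>t. f (x(i := t))) (x i))"

definition Lplus :: "nat \<Rightarrow> (nat \<Rightarrow> real) \<Rightarrow> real" where
  "Lplus m x = (\<Sum>i=1..m. x i)"

definition Lminus :: "(nat \<Rightarrow> real) \<Rightarrow> nat \<Rightarrow> ((nat \<Rightarrow> real) \<Rightarrow> real) \<Rightarrow> (nat \<Rightarrow> real) \<Rightarrow> real" where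
  "Lminus \<nu> m f = (\<lambda>x. \<Sum>i=1..m. x i * pd i (pd i f) x + 2 * \<nu> i * pd i f x)"

text \<open>CK_m^{BG}(p) for p homogeneous of degree d in x_1..x_{m-1}; the degree d is passed
  explicitly.\<close>
definition CK :: "(nat \<Rightarrow> real) \<Rightarrow> nat \<Rightarrow> nat \<Rightarrow> ((nat \<Rightarrow> real) \<Rightarrow> real) \<Rightarrow> (nat \<Rightarrow> real) \<Rightarrow> real" where
  "CK \<nu> m d p = (\<lambda>x. Gamma (2 * \<nu> m) *
     (\<Sum>j=0..d. ((\<lambda>f y. - y m * Lminus \<nu> (m - 1) f y) ^^ j) p x
                  / (fact j * Gamma (real j + 2 * \<nu> m))))"

text \<open>G k = CK_{k+1}((L_+^{[k]})^{j_k} CK_k( ... (L_+^{[2]})^{j_2} CK_2((L_+^{[1]})^{j_1}) ...)),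
  noting (L_+^{[1]})^{j_1} = x_1^{j_1}. The argument of CK_{k+2} in the successor step is
  homogeneous of degree j_1 + ... + j_{k+1}.\<close>
fun psiAux :: "(nat \<Rightarrow> real) \<Rightarrow> (nat \<Rightarrow> nat) \<Rightarrow> nat \<Rightarrow> (nat \<Rightarrow> real) \<Rightarrow> real" where
  "psiAux \<nu> j 0 = (\<lambda>x. 1)"
| "psiAux \<nu> j (Suc k) =
     CK \<nu> (k + 2) (\<Sum>l=1..k+1. j l) (\<lambda>x. Lplus (k + 1) x ^ j (k + 1) * psiAux \<nu> j k x)"

definition psiBG :: "(nat \<Rightarrow> real) \<Rightarrow> (nat \<Rightarrow> nat) \<Rightarrow> nat \<Rightarrow> (nat \<Rightarrow> real) \<Rightarrow> real" where
  "psiBG \<nu> j n = psiAux \<nu> j (n - 1)"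

definition jacobiP :: "nat \<Rightarrow> real \<Rightarrow> real \<Rightarrow> real \<Rightarrow> real" where
  "jacobiP m a b x = (\<Sum>s=0..m. ((real m + a) gchoose s) * ((real m + b) gchoose (m - s))
       * ((x - 1) / 2) ^ (m - s) * ((x + 1) / 2) ^ s)"

definition jacobiHom :: "nat \<Rightarrow> real \<Rightarrow> real \<Rightarrow> real \<Rightarrow> real \<Rightarrow> real" where
  "jacobiHom m a b u v = (\<Sum>s=0..m. ((real m + a) gchoose s) * ((real m + b) gchoose (m - s))
       * ((u - v) / 2) ^ (m - s) * ((u + v) / 2) ^ s)"

lemma jacobiHom_eq: "v \<noteq> 0 \<Longrightarrow> jacobiHom m a b u v = v ^ m * jacobiP m a b (u / v)"
proof -
  assume v: "v \<noteq> 0"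
  have "((u - v) / 2) ^ (m - s) * ((u + v) / 2) ^ s
        = v ^ m * (((u / v - 1) / 2) ^ (m - s) * ((u / v + 1) / 2) ^ s)" if "s \<le> m" for s
  proof -
    have "u - v = v * (u / v - 1)" "u + v = v * (u / v + 1)" using v by (auto simp: field_simps)
    hence "((u - v) / 2) ^ (m - s) * ((u + v) / 2) ^ s
         = v ^ (m - s) * v ^ s * (((u / v - 1) / 2) ^ (m - s) * ((u / v + 1) / 2) ^ s)"
      by (simp only: times_divide_eq_right[symmetric] power_mult_distrib mult_ac)
    also have "v ^ (m - s) * v ^ s = v ^ m" using that by (simp add: power_add[symmetric])
    finally show ?thesis .
  qed
  thus ?thesis unfolding jacobiHom_def jacobiP_def
    by (simp add: sum_distrib_left mult_ac)
qed

definition alphaBG :: "(nat \<Rightarrow> real) \<Rightarrow> (nat \<Rightarrow> nat) \<Rightarrow> nat \<Rightarrow> real" where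
  "alphaBG \<nu> j k = 2 * (\<Sum>i=1..k. \<nu> i) - 1 + 2 * (\<Sum>l=1..k-1. real (j l))"

end

theory Submission
  imports Defs
begin


inductive poly_fun :: "((nat \<Rightarrow> real) \<Rightarrow> real) \<Rightarrow> bool" where
  pf_const: "poly_fun (\<lambda>x. c)"
| pf_var: "poly_fun (\<lambda>x. x i)"
| pf_add: "poly_fun f \<Longrightarrow> poly_fun g \<Longrightarrow> poly_fun (\<lambda>x. f x + g x)"
| pf_mult: "poly_fun f \<Longrightarrow> poly_fun g \<Longrightarrow> poly_fun (\<lambda>x. f x * g x)"

lemma pf_deriv_ex:
  assumes "poly_fun f"
  shows "\<exists>f'. poly_fun f' \<and> (\<forall>x. ((\<lambda>t. f (x(i:=t))) has_real_derivative f' x) (at (x i)))"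
  using assms
proof induction
  case (pf_const c)
  then show ?case by (intro exI[of _ "\<lambda>x. 0"]) (auto intro: poly_fun.intros)
next
  case (pf_var k)
  show ?case
  proof (cases "k = i")
    case True
    then show ?thesis by (intro exI[of _ "\<lambda>x. 1"]) (auto intro: poly_fun.intros)
  next
    case False
    then show ?thesis by (intro exI[of _ "\<lambda>x. 0"]) (auto intro: poly_fun.intros)
  qed
next
  case (pf_add f g)
  then obtain f' g' where h: "poly_fun f'" "poly_fun g'"
    "\<forall>x. ((\<lambda>t. f (x(i:=t))) has_real_derivative f' x) (at (x i))"
    "\<forall>x. ((\<lambda>t. g (x(i:=t))) has_real_derivative g' x) (at (x i))" by blast
  have "((\<lambda>t. f (x(i:=t)) + g (x(i:=t))) has_real_derivative f' x + g' x) (at (x i))" for x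
    using h(3,4) by (intro DERIV_add) blast+
  then show ?case using h(1,2) by (intro exI[of _ "\<lambda>x. f' x + g' x"]) (simp add: poly_fun.intros fun_upd_def)
next
  case (pf_mult f g)
  then obtain f' g' where h: "poly_fun f'" "poly_fun g'"
    "\<forall>x. ((\<lambda>t. f (x(i:=t))) has_real_derivative f' x) (at (x i))"
    "\<forall>x. ((\<lambda>t. g (x(i:=t))) has_real_derivative g' x) (at (x i))" by blast
  have "((\<lambda>t. f (x(i:=t)) * g (x(i:=t))) has_real_derivative f' x * g x + f x * g' x) (at (x i))" for x
  proof -
    have "((\<lambda>t. f (x(i:=t)) * g (x(i:=t))) has_real_derivative f' x * g (x(i:=x i)) + g' x * f (x(i:=x i))) (at (x i))"
      using h(3,4) by (intro DERIV_mult) blast+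
    then show ?thesis by (simp add: mult.commute)
  qed
  then show ?case using h pf_mult by (intro exI[of _ "\<lambda>x. f' x * g x + f x * g' x"]) (simp add: poly_fun.intros fun_upd_def)
qed

lemma pd_deriv:
  assumes "poly_fun f"
  shows "((\<lambda>t. f (x(i:=t))) has_real_derivative pd i f x) (at (x i))"
proof -
  obtain f' where f': "poly_fun f'" "\<forall>x. ((\<lambda>t. f (x(i:=t))) has_real_derivative f' x) (at (x i))"
    using pf_deriv_ex[OF assms] by blast
  then have "pd i f x = f' x" unfolding pd_def by (simp add: DERIV_imp_deriv)
  then show ?thesis using f' by simp
qed

lemma pd_poly: "poly_fun f \<Longrightarrow> poly_fun (pd i f)"
proof -
  assume a: "poly_fun f"
  obtain f' where f': "poly_fun f'" "\<forall>x. ((\<lambda>t. f (x(i:=t))) has_real_derivative f' x) (at (x i))"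
    using pf_deriv_ex[OF a] by blast
  have "pd i f = f'" unfolding pd_def using f'(2) by (intro ext) (simp add: DERIV_imp_deriv)
  then show ?thesis using f' by simp
qed

lemma pd_unique:
  assumes "\<And>x. ((\<lambda>t. f (x(i:=t))) has_real_derivative g x) (at (x i))"
  shows "pd i f = g"
  unfolding pd_def using assms by (intro ext) (simp add: DERIV_imp_deriv)



lemma pf_cmult: "poly_fun f \<Longrightarrow> poly_fun (\<lambda>x. c * f x)"
  using pf_mult[OF pf_const] by blast

lemma pf_sub: "poly_fun f \<Longrightarrow> poly_fun g \<Longrightarrow> poly_fun (\<lambda>x. f x - g x)"
proof -
  assume "poly_fun f" "poly_fun g"
  then have "poly_fun (\<lambda>x. f x + (-1) * g x)" by (intro pf_add pf_cmult)
  then show ?thesis by simp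
qed

lemma pf_pow: "poly_fun f \<Longrightarrow> poly_fun (\<lambda>x. f x ^ n)"
proof (induction n)
  case 0 then show ?case using pf_const[of 1] by simp
next
  case (Suc n) then show ?case using pf_mult[of f "\<lambda>x. f x ^ n"] by simp
qed

lemma pf_sum: "finite A \<Longrightarrow> (\<And>a. a \<in> A \<Longrightarrow> poly_fun (f a)) \<Longrightarrow> poly_fun (\<lambda>x. \<Sum>a\<in>A. f a x)"
proof (induction A rule: finite_induct)
  case empty then show ?case using pf_const[of 0] by simp
next
  case (insert a A) then show ?case using pf_add[of "f a" "\<lambda>x. \<Sum>a\<in>A. f a x"] by simp
qed

lemma pf_prod: "finite A \<Longrightarrow> (\<And>a. a \<in> A \<Longrightarrow> poly_fun (f a)) \<Longrightarrow> poly_fun (\<lambda>x. \<Prod>a\<in>A. f a x)"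
proof (induction A rule: finite_induct)
  case empty then show ?case using pf_const[of 1] by simp
next
  case (insert a A) then show ?case using pf_mult[of "f a" "\<lambda>x. \<Prod>a\<in>A. f a x"] by simp
qed

lemma pf_Lplus: "poly_fun (Lplus m)"
  unfolding Lplus_def[abs_def] by (intro pf_sum pf_var) auto

lemma pd_const: "pd i (\<lambda>x. c) = (\<lambda>x. 0)"
  by (rule pd_unique) simp

lemma pd_var: "pd i (\<lambda>x. x k) = (\<lambda>x. if k = i then 1 else 0)"
  by (rule pd_unique) (cases "k = i", auto)

lemma pd_add: "poly_fun f \<Longrightarrow> poly_fun g \<Longrightarrow> pd i (\<lambda>x. f x + g x) = (\<lambda>x. pd i f x + pd i g x)"
  by (rule pd_unique) (intro DERIV_add pd_deriv)

lemma pd_mult: "poly_fun f \<Longrightarrow> poly_fun g \<Longrightarrow> pd i (\<lambda>x. f x * g x) = (\<lambda>x. pd i f x * g x + f x * pd i g x)"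
proof (rule pd_unique)
  fix x assume a: "poly_fun f" "poly_fun g"
  have "((\<lambda>t. f (x(i:=t)) * g (x(i:=t))) has_real_derivative pd i f x * g (x(i:=x i)) + pd i g x * f (x(i:=x i))) (at (x i))"
    using a by (intro DERIV_mult pd_deriv)
  then show "((\<lambda>t. f (x(i:=t)) * g (x(i:=t))) has_real_derivative pd i f x * g x + f x * pd i g x) (at (x i))"
    by (simp add: mult.commute)
qed

lemma pd_cmult: "poly_fun f \<Longrightarrow> pd i (\<lambda>x. c * f x) = (\<lambda>x. c * pd i f x)"
  by (simp add: pd_mult pf_const pd_const)

lemma pd_sub: "poly_fun f \<Longrightarrow> poly_fun g \<Longrightarrow> pd i (\<lambda>x. f x - g x) = (\<lambda>x. pd i f x - pd i g x)"
  by (rule pd_unique) (intro DERIV_diff pd_deriv)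

lemma pd_pow: "poly_fun f \<Longrightarrow> pd i (\<lambda>x. f x ^ n) = (\<lambda>x. real n * f x ^ (n - 1) * pd i f x)"
proof (rule pd_unique)
  fix x assume a: "poly_fun f"
  have "((\<lambda>t. f (x(i:=t)) ^ n) has_real_derivative of_nat n * (pd i f x * f (x(i:=x i)) ^ (n - Suc 0))) (at (x i))"
    using a by (intro DERIV_power pd_deriv)
  then show "((\<lambda>t. f (x(i:=t)) ^ n) has_real_derivative real n * f x ^ (n - 1) * pd i f x) (at (x i))"
    by (simp add: mult_ac)
qed

lemma pd_sum: "finite A \<Longrightarrow> (\<And>a. a \<in> A \<Longrightarrow> poly_fun (f a)) \<Longrightarrow>
   pd i (\<lambda>x. \<Sum>a\<in>A. f a x) = (\<lambda>x. \<Sum>a\<in>A. pd i (f a) x)"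
proof (induction A rule: finite_induct)
  case empty then show ?case by (simp add: pd_const)
next
  case (insert a A)
  then show ?case using pd_add[of "f a" "\<lambda>x. \<Sum>a\<in>A. f a x" i] pf_sum[of A f] by simp
qed

definition indep :: "nat \<Rightarrow> ((nat \<Rightarrow> real) \<Rightarrow> real) \<Rightarrow> bool" where
  "indep k f \<longleftrightarrow> (\<forall>x t. f (x(k:=t)) = f x)"

lemma pd_indep: "indep k f \<Longrightarrow> pd k f = (\<lambda>x. 0)"
  unfolding indep_def by (rule pd_unique) simp

lemma indep_const: "indep k (\<lambda>x. c)" by (simp add: indep_def)
lemma indep_var: "i \<noteq> k \<Longrightarrow> indep k (\<lambda>x. x i)" by (simp add: indep_def)
lemma indep_add: "indep k f \<Longrightarrow> indep k g \<Longrightarrow> indep k (\<lambda>x. f x + g x)" by (simp add: indep_def)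
lemma indep_mult: "indep k f \<Longrightarrow> indep k g \<Longrightarrow> indep k (\<lambda>x. f x * g x)" by (simp add: indep_def)
lemma indep_pow: "indep k f \<Longrightarrow> indep k (\<lambda>x. f x ^ n)" by (simp add: indep_def)
lemma indep_sum: "(\<And>a. a \<in> A \<Longrightarrow> indep k (f a)) \<Longrightarrow> indep k (\<lambda>x. \<Sum>a\<in>A. f a x)"
  by (simp add: indep_def)
lemma indep_Lplus: "k > m \<Longrightarrow> indep k (Lplus m)"
  unfolding indep_def Lplus_def by auto

lemma pd_Lplus: "pd i (Lplus m) = (\<lambda>x. if i \<in> {1..m} then 1 else 0)"
proof -
  have "pd i (Lplus m) = pd i (\<lambda>x. \<Sum>l\<in>{1..m}. x l)" by (simp add: Lplus_def[abs_def])
  also have "\<dots> = (\<lambda>x. \<Sum>l\<in>{1..m}. pd i (\<lambda>x. x l) x)" by (rule pd_sum) (auto intro: pf_var)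
  also have "\<dots> = (\<lambda>x. if i \<in> {1..m} then 1 else 0)" by (simp add: pd_var)
  finally show ?thesis .
qed



definition hom :: "nat \<Rightarrow> real \<Rightarrow> ((nat \<Rightarrow> real) \<Rightarrow> real) \<Rightarrow> bool" where
  "hom m D f \<longleftrightarrow> poly_fun f \<and> (\<forall>x. (\<Sum>i=1..m. x i * pd i f x) = D * f x)"

lemma hom_poly: "hom m D f \<Longrightarrow> poly_fun f" by (simp add: hom_def)
lemma hom_euler: "hom m D f \<Longrightarrow> (\<Sum>i=1..m. x i * pd i f x) = D * f x" by (simp add: hom_def)

lemma hom_const: "hom m 0 (\<lambda>x. c)"
  by (simp add: hom_def pd_const pf_const)

lemma hom_var: "k \<in> {1..m} \<Longrightarrow> hom m 1 (\<lambda>x. x k)"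
  by (simp add: hom_def pd_var pf_var if_distrib sum.delta' cong: if_cong)

lemma hom_add: "hom m D f \<Longrightarrow> hom m D g \<Longrightarrow> hom m D (\<lambda>x. f x + g x)"
  by (simp add: hom_def pd_add pf_add distrib_left sum.distrib)

lemma hom_mult: "hom m D f \<Longrightarrow> hom m E g \<Longrightarrow> hom m (D + E) (\<lambda>x. f x * g x)"
proof -
  assume a: "hom m D f" "hom m E g"
  have "(\<Sum>i=1..m. x i * (pd i f x * g x + f x * pd i g x)) = (D + E) * (f x * g x)" for x
  proof -
    have "(\<Sum>i=1..m. x i * (pd i f x * g x + f x * pd i g x))
        = (\<Sum>i=1..m. x i * pd i f x) * g x + f x * (\<Sum>i=1..m. x i * pd i g x)"
      by (simp add: sum_distrib_left sum_distrib_right sum.distrib algebra_simps)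
    also have "\<dots> = (D + E) * (f x * g x)" using a by (simp add: hom_def algebra_simps)
    finally show ?thesis .
  qed
  then show ?thesis using a by (simp add: hom_def pd_mult pf_mult)
qed

lemma hom_cmult: "hom m D f \<Longrightarrow> hom m D (\<lambda>x. c * f x)"
  using hom_mult[OF hom_const[of m c]] by simp

lemma hom_pow: "hom m D f \<Longrightarrow> hom m (real n * D) (\<lambda>x. f x ^ n)"
proof (induction n)
  case 0 then show ?case using hom_const[of m 1] by simp
next
  case (Suc n) then show ?case using hom_mult[of m D f "real n * D" "\<lambda>x. f x ^ n"]
    by (simp add: algebra_simps)
qed

lemma hom_sum: "finite A \<Longrightarrow> (\<And>a. a \<in> A \<Longrightarrow> hom m D (f a)) \<Longrightarrow> hom m D (\<lambda>x. \<Sum>a\<in>A. f a x)"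
proof (induction A rule: finite_induct)
  case empty then show ?case by (simp add: hom_def pd_const pf_const)
next
  case (insert a A) then show ?case using hom_add[of m D "f a" "\<lambda>x. \<Sum>a\<in>A. f a x"] by simp
qed

lemma hom_Lplus: "hom m 1 (Lplus m)"
proof -
  have "hom m 1 (\<lambda>x. \<Sum>l\<in>{1..m}. x l)" by (intro hom_sum hom_var) auto
  then show ?thesis by (simp add: Lplus_def[abs_def])
qed

lemma hom_Suc: "hom m D f \<Longrightarrow> indep (Suc m) f \<Longrightarrow> hom (Suc m) D f"
  by (simp add: hom_def pd_indep)

lemma Lplus_Suc: "Lplus (Suc m) x = Lplus m x + x (Suc m)"
  by (simp add: Lplus_def)

lemma pd_LH: "poly_fun H \<Longrightarrow> i \<in> {1..m} \<Longrightarrow>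
  pd i (\<lambda>x. Lplus m x ^ b * H x) = (\<lambda>x. real b * Lplus m x ^ (b-1) * H x + Lplus m x ^ b * pd i H x)"
  by (simp add: pd_mult pd_pow pf_pow pf_Lplus pd_Lplus)

lemma pd_LH': "poly_fun H \<Longrightarrow> i \<in> {1..m} \<Longrightarrow>
  pd i (\<lambda>x. c * Lplus m x ^ b * H x) = (\<lambda>x. c * real b * Lplus m x ^ (b-1) * H x + c * Lplus m x ^ b * pd i H x)"
proof -
  assume a: "poly_fun H" "i \<in> {1..m}"
  have "pd i (\<lambda>x. c * Lplus m x ^ b * H x) = pd i (\<lambda>x. c * (Lplus m x ^ b * H x))" by (simp add: mult.assoc)
  also have "\<dots> = (\<lambda>x. c * pd i (\<lambda>x. Lplus m x ^ b * H x) x)"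
    using a by (intro pd_cmult pf_mult pf_pow pf_Lplus)
  also have "\<dots> = (\<lambda>x. c * real b * Lplus m x ^ (b-1) * H x + c * Lplus m x ^ b * pd i H x)"
    using a by (subst pd_LH[OF a]) (simp add: algebra_simps)
  finally show ?thesis .
qed

lemma pd_pd_LH: "poly_fun H \<Longrightarrow> i \<in> {1..m} \<Longrightarrow>
  pd i (pd i (\<lambda>x. Lplus m x ^ b * H x)) = (\<lambda>x. real b * real (b-1) * Lplus m x ^ (b-1-1) * H x
      + 2 * real b * Lplus m x ^ (b-1) * pd i H x + Lplus m x ^ b * pd i (pd i H) x)"
proof -
  assume a: "poly_fun H" "i \<in> {1..m}"
  have p1: "poly_fun (\<lambda>x. real b * Lplus m x ^ (b-1) * H x)"
    using a by (intro pf_mult pf_pow pf_Lplus pf_const)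
  have p2: "poly_fun (\<lambda>x. Lplus m x ^ b * pd i H x)"
    using a by (intro pf_mult pf_pow pf_Lplus pd_poly)
  have "pd i (pd i (\<lambda>x. Lplus m x ^ b * H x)) = pd i (\<lambda>x. real b * Lplus m x ^ (b-1) * H x + Lplus m x ^ b * pd i H x)"
    using pd_LH[OF a] by simp
  also have "\<dots> = (\<lambda>x. pd i (\<lambda>x. real b * Lplus m x ^ (b-1) * H x) x + pd i (\<lambda>x. Lplus m x ^ b * pd i H x) x)"
    by (rule pd_add[OF p1 p2])
  also have "\<dots> = (\<lambda>x. real b * real (b-1) * Lplus m x ^ (b-1-1) * H x + real b * Lplus m x ^ (b-1) * pd i H x
     + (real b * Lplus m x ^ (b-1) * pd i H x + Lplus m x ^ b * pd i (pd i H) x))"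
    using a by (simp add: pd_LH'[OF a] pd_LH[OF pd_poly[OF a(1)] a(2)])
  finally show ?thesis by (simp add: algebra_simps)
qed

lemma Lminus_LH:
  assumes H: "hom m D H" and L0: "Lminus \<nu> m H = (\<lambda>x. 0)"
  shows "Lminus \<nu> m (\<lambda>x. Lplus m x ^ b * H x) =
     (\<lambda>x. real b * (real b - 1 + (2 * (\<Sum>i=1..m. \<nu> i) + 2 * D)) * Lplus m x ^ (b-1) * H x)"
proof
  fix x
  let ?L = "Lplus m x"
  have pH: "poly_fun H" using H by (simp add: hom_def)
  have "Lminus \<nu> m (\<lambda>x. Lplus m x ^ b * H x) x =
     (\<Sum>i=1..m. x i * (real b * real (b-1) * ?L ^ (b-1-1) * H x
      + 2 * real b * ?L ^ (b-1) * pd i H x + ?L ^ b * pd i (pd i H) x)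
      + 2 * \<nu> i * (real b * ?L ^ (b-1) * H x + ?L ^ b * pd i H x))"
    unfolding Lminus_def
  proof (intro sum.cong refl)
    fix i assume i: "i \<in> {1..m}"
    show "x i * pd i (pd i (\<lambda>x. Lplus m x ^ b * H x)) x + 2 * \<nu> i * pd i (\<lambda>x. Lplus m x ^ b * H x) x =
      x i * (real b * real (b-1) * ?L ^ (b-1-1) * H x
      + 2 * real b * ?L ^ (b-1) * pd i H x + ?L ^ b * pd i (pd i H) x)
      + 2 * \<nu> i * (real b * ?L ^ (b-1) * H x + ?L ^ b * pd i H x)"
      unfolding pd_pd_LH[OF pH i] unfolding pd_LH[OF pH i] by simp
  qed
  also have "\<dots> = real b * real (b-1) * ?L ^ (b-1-1) * H x * (\<Sum>i=1..m. x i)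
      + 2 * real b * ?L ^ (b-1) * (\<Sum>i=1..m. x i * pd i H x)
      + ?L ^ b * (\<Sum>i=1..m. x i * pd i (pd i H) x + 2 * \<nu> i * pd i H x)
      + 2 * real b * ?L ^ (b-1) * H x * (\<Sum>i=1..m. \<nu> i)"
  proof -
    let ?A = "real b * real (b-1) * ?L ^ (b-1-1) * H x" and ?B = "2 * real b * ?L ^ (b-1)"
      and ?C = "?L ^ b" and ?E = "2 * real b * ?L ^ (b-1) * H x"
    have "?A * (\<Sum>i=1..m. x i) + ?B * (\<Sum>i=1..m. x i * pd i H x)
      + ?C * (\<Sum>i=1..m. x i * pd i (pd i H) x + 2 * \<nu> i * pd i H x) + ?E * (\<Sum>i=1..m. \<nu> i)
      = (\<Sum>i=1..m. ?A * x i + ?B * (x i * pd i H x) + ?C * (x i * pd i (pd i H) x + 2 * \<nu> i * pd i H x) + ?E * \<nu> i)"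
      by (simp add: sum.distrib sum_distrib_left distrib_left)
    also have "\<dots> = (\<Sum>i=1..m. x i * (?A + ?B * pd i H x + ?L ^ b * pd i (pd i H) x)
      + 2 * \<nu> i * (real b * ?L ^ (b-1) * H x + ?L ^ b * pd i H x))"
      by (intro sum.cong refl) (simp add: algebra_simps)
    finally show ?thesis by simp
  qed
  finally have e1: "Lminus \<nu> m (\<lambda>x. Lplus m x ^ b * H x) x = real b * real (b-1) * ?L ^ (b-1-1) * H x * (\<Sum>i=1..m. x i)
      + 2 * real b * ?L ^ (b-1) * (\<Sum>i=1..m. x i * pd i H x)
      + ?L ^ b * (\<Sum>i=1..m. x i * pd i (pd i H) x + 2 * \<nu> i * pd i H x)
      + 2 * real b * ?L ^ (b-1) * H x * (\<Sum>i=1..m. \<nu> i)" .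

  have s1: "(\<Sum>i=1..m. x i * pd i (pd i H) x + 2 * \<nu> i * pd i H x) = 0"
    using fun_cong[OF L0, of x] by (simp add: Lminus_def)
  have s2: "(\<Sum>i=1..m. x i * pd i H x) = D * H x" using H by (simp add: hom_def)
  have s3: "(\<Sum>i=1..m. x i) = ?L" by (simp add: Lplus_def)
  have s4: "real b * real (b-1) * ?L ^ (b-1-1) * H x * ?L = real b * (real b - 1) * ?L ^ (b-1) * H x"
  proof (cases "b \<ge> 2")
    case True
    then obtain c where c: "b = Suc (Suc c)" by (metis add_2_eq_Suc le_Suc_ex)
    then show ?thesis by (simp add: mult_ac)
  next
    case False
    then have "b = 0 \<or> b = 1" by auto
    then show ?thesis by auto
  qed
  have alg: "\<And>A2 rb P h C S. A2 = rb * (rb - 1) * P * h \<Longrightarrow>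
     A2 + 2 * rb * P * (D * h) + C * 0 + 2 * rb * P * h * S = rb * (rb - 1 + (2 * S + 2 * D)) * P * h"
    by (simp add: algebra_simps)
  show "Lminus \<nu> m (\<lambda>x. Lplus m x ^ b * H x) x =
     real b * (real b - 1 + (2 * (\<Sum>i=1..m. \<nu> i) + 2 * D)) * ?L ^ (b-1) * H x"
    unfolding e1 s1 s2 s3 by (rule alg[OF s4])
qed



lemma prod_desc_fact: "(\<Prod>t<s. real (s + r) - real t) * fact r = fact (s + r)"
proof (induction s)
  case 0 then show ?case by simp
next
  case (Suc s)
  have "(\<Prod>t<Suc s. real (Suc s + r) - real t) = real (Suc s + r) * (\<Prod>t<s. real (s + r) - real t)"
    by (simp add: prod.lessThan_Suc_shift del: prod.lessThan_Suc)
  then show ?case using Suc by (simp add: fact_Suc)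
qed

lemma Gamma_shift: "(z::real) > 0 \<Longrightarrow> Gamma (z + real r) = pochhammer z r * Gamma z"
proof (induction r)
  case 0 then show ?case by simp
next
  case (Suc r)
  have nz: "z + real r \<notin> \<int>\<^sub>\<le>\<^sub>0" using Suc.prems nonpos_Ints_nonpos by fastforce
  have "Gamma (z + real (Suc r)) = Gamma (z + real r + 1)" by (simp add: ac_simps)
  also have "\<dots> = (z + real r) * Gamma (z + real r)" using Gamma_plus1[OF nz] .
  finally show ?case using Suc by (simp add: pochhammer_rec')
qed

definition cc :: "nat \<Rightarrow> real \<Rightarrow> nat \<Rightarrow> real" where
  "cc a \<gamma> i = (\<Prod>t<i. (real a - real t) * (real a - real t - 1 + \<gamma>))"

definition ww :: "real \<Rightarrow> nat \<Rightarrow> real" where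
  "ww \<beta> i = Gamma \<beta> * (-1) ^ i / (fact i * Gamma (real i + \<beta>))"

lemma cc_zero: "i > a \<Longrightarrow> cc a \<gamma> i = 0"
  unfolding cc_def by (rule prod_zero) (auto intro!: bexI[of _ a])

lemma term_eq:
  assumes "\<beta> > 0" and "s \<le> a"
  shows "ww \<beta> s * y ^ s * cc a \<gamma> s * L ^ (a - s) =
    (-1) ^ a * fact a * Gamma \<beta> / Gamma (\<beta> + real a) *
    ((real a + (\<gamma> - 1)) gchoose s) * ((real a + (\<beta> - 1)) gchoose (a - s)) * (- L) ^ (a - s) * y ^ s"
proof -
  obtain r where a: "a = s + r" using assms(2) le_Suc_ex by blast
  have ar: "a - s = r" using a by simp
  have c1: "(\<Prod>t<s. real a - real t) = fact a / fact r"
    using prod_desc_fact[of s r] a by (simp add: field_simps)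
  have c2: "(\<Prod>t<s. real a - real t - 1 + \<gamma>) = fact s * ((real a + (\<gamma> - 1)) gchoose s)"
    by (simp add: gbinomial_prod_rev atLeast0LessThan algebra_simps)
  have cc: "cc a \<gamma> s = fact a / fact r * (fact s * ((real a + (\<gamma> - 1)) gchoose s))"
    unfolding cc_def prod.distrib c1 c2 ..
  have g2: "(real a + (\<beta> - 1)) gchoose r = pochhammer (\<beta> + real s) r / fact r"
    by (simp add: gbinomial_pochhammer' a algebra_simps)
  have bs: "\<beta> + real s > 0" using assms by simp
  have G: "Gamma (\<beta> + real a) = pochhammer (\<beta> + real s) r * Gamma (\<beta> + real s)"
    using Gamma_shift[OF bs, of r] a by (simp add: add.assoc)
  have P: "pochhammer (\<beta> + real s) r > 0" using bs by (intro pochhammer_pos)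
  have Gs: "Gamma (\<beta> + real s) > 0" using bs by simp
  have sgn: "(-1::real) ^ a * (-1) ^ r = (-1) ^ s"
  proof -
    have "(-1::real) ^ r * (-1) ^ r = 1" by (simp flip: power_mult_distrib)
    then show ?thesis using a by (simp add: power_add mult.assoc)
  qed
  show ?thesis
    unfolding ww_def ar cc g2 G
    using P Gs sgn
    by (simp add: field_simps power_minus[of L] add.commute)
qed



lemma jac_sum:
  assumes "\<beta> > 0"
  shows "(\<Sum>i\<le>a. ww \<beta> i * y ^ i * cc a \<gamma> i * L ^ (a - i)) =
    (-1) ^ a * fact a * Gamma \<beta> / Gamma (\<beta> + real a) * jacobiHom a (\<gamma> - 1) (\<beta> - 1) (y - L) (L + y)"
proof -
  have u: "((y - L) - (L + y)) / 2 = - L" "((y - L) + (L + y)) / 2 = y" by auto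
  show ?thesis
    unfolding jacobiHom_def u sum_distrib_left atLeast0AtMost
    by (intro sum.cong refl, subst term_eq[OF assms]) (simp_all add: mult.assoc)
qed

lemma Lminus_poly: "poly_fun f \<Longrightarrow> poly_fun (Lminus \<nu> m f)"
  unfolding Lminus_def by (intro pf_sum pf_add pf_mult pf_var pf_const pd_poly) auto

lemma Lminus_cmult: "poly_fun f \<Longrightarrow> Lminus \<nu> m (\<lambda>x. c * f x) = (\<lambda>x. c * Lminus \<nu> m f x)"
  unfolding Lminus_def
  by (simp add: pd_cmult pd_poly pf_cmult sum_distrib_left algebra_simps)

lemma Lminus_add: "poly_fun f \<Longrightarrow> poly_fun g \<Longrightarrow>
   Lminus \<nu> m (\<lambda>x. f x + g x) = (\<lambda>x. Lminus \<nu> m f x + Lminus \<nu> m g x)"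
  unfolding Lminus_def
  by (simp add: pd_add pd_poly pf_add sum.distrib[symmetric] algebra_simps)

lemma Lminus_sum: "finite A \<Longrightarrow> (\<And>a. a \<in> A \<Longrightarrow> poly_fun (f a)) \<Longrightarrow>
   Lminus \<nu> m (\<lambda>x. \<Sum>a\<in>A. f a x) = (\<lambda>x. \<Sum>a\<in>A. Lminus \<nu> m (f a) x)"
proof (induction A rule: finite_induct)
  case empty then show ?case by (simp add: Lminus_def pd_const)
next
  case (insert a A)
  then show ?case using Lminus_add[of "f a" "\<lambda>x. \<Sum>a\<in>A. f a x" \<nu> m] pf_sum[of A f] by simp
qed

lemma pd_mult_indep: "poly_fun q \<Longrightarrow> poly_fun g \<Longrightarrow> indep l q \<Longrightarrow>
  pd l (\<lambda>x. q x * g x) = (\<lambda>x. q x * pd l g x)"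
  by (simp add: pd_mult pd_indep)

lemma Lminus_mult_indep:
  assumes "poly_fun q" "poly_fun g" "\<And>l. l \<in> {1..m} \<Longrightarrow> indep l q"
  shows "Lminus \<nu> m (\<lambda>x. q x * g x) = (\<lambda>x. q x * Lminus \<nu> m g x)"
  unfolding Lminus_def
proof
  fix x
  have "(\<Sum>i = 1..m. x i * pd i (pd i (\<lambda>x. q x * g x)) x + 2 * \<nu> i * pd i (\<lambda>x. q x * g x) x)
     = (\<Sum>i = 1..m. q x * (x i * pd i (pd i g) x + 2 * \<nu> i * pd i g x))"
  proof (intro sum.cong refl)
    fix i assume i: "i \<in> {1..m}"
    show "x i * pd i (pd i (\<lambda>x. q x * g x)) x + 2 * \<nu> i * pd i (\<lambda>x. q x * g x) x
       = q x * (x i * pd i (pd i g) x + 2 * \<nu> i * pd i g x)"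
    proof -
      have e1: "pd i (\<lambda>x. q x * g x) = (\<lambda>x. q x * pd i g x)" by (rule pd_mult_indep[OF assms(1,2) assms(3)[OF i]])
      have e2: "pd i (\<lambda>x. q x * pd i g x) = (\<lambda>x. q x * pd i (pd i g) x)"
        by (rule pd_mult_indep[OF assms(1) pd_poly[OF assms(2)] assms(3)[OF i]])
      show ?thesis unfolding e1 e2 by (simp add: algebra_simps)
    qed
  qed
  then show "(\<Sum>i = 1..m. x i * pd i (pd i (\<lambda>x. q x * g x)) x + 2 * \<nu> i * pd i (\<lambda>x. q x * g x) x)
     = q x * (\<Sum>i = 1..m. x i * pd i (pd i g) x + 2 * \<nu> i * pd i g x)"
    by (simp add: sum_distrib_left)
qed

lemma Lminus_Suc: "Lminus \<nu> (Suc m) f = (\<lambda>x. Lminus \<nu> m f x +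
    (x (Suc m) * pd (Suc m) (pd (Suc m) f) x + 2 * \<nu> (Suc m) * pd (Suc m) f x))"
  unfolding Lminus_def by (simp add: sum.cl_ivl_Suc)

lemma ww_rec: "\<beta> > 0 \<Longrightarrow> ww \<beta> (Suc k) * (real (Suc k) * (real (Suc k) - 1 + \<beta>)) = - ww \<beta> k"
proof -
  assume b: "\<beta> > 0"
  have nz: "real k + \<beta> \<notin> \<int>\<^sub>\<le>\<^sub>0" using b nonpos_Ints_nonpos by fastforce
  have G: "Gamma (real (Suc k) + \<beta>) = (real k + \<beta>) * Gamma (real k + \<beta>)"
    using Gamma_plus1[OF nz] by (simp add: ac_simps)
  have p: "real k + \<beta> > 0" "Gamma (real k + \<beta>) > 0" using b by auto
  have f: "fact k > (0::real)" by simp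
  have "ww \<beta> (Suc k) = - Gamma \<beta> * (-1) ^ k / (real (Suc k) * fact k * ((real k + \<beta>) * Gamma (real k + \<beta>)))"
    unfolding ww_def G by (simp add: fact_Suc)
  moreover have "real (Suc k) - 1 + \<beta> = real k + \<beta>" by simp
  moreover have "\<And>A c F d G::real. c \<noteq> 0 \<Longrightarrow> d \<noteq> 0 \<Longrightarrow> - A / (c * F * (d * G)) * (c * d) = - (A / (F * G))"
    by (simp add: field_simps)
  ultimately show ?thesis unfolding ww_def[of \<beta> k] using p
    by (metis add_pos_pos mult_eq_0_iff of_nat_0_less_iff zero_less_Suc less_numeral_extra(3) mult_minus_left)
qed



lemma pf_neg_var: "poly_fun (\<lambda>x. - x k)"
  using pf_cmult[OF pf_var, of "-1" k] by simp

lemma indep_cmult: "indep k f \<Longrightarrow> indep k (\<lambda>x. c * f x)" by (simp add: indep_def)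

lemma hom_deg: "hom m D f \<Longrightarrow> D = E \<Longrightarrow> hom m E f" by simp

lemma pd_ypow: "poly_fun g \<Longrightarrow> indep k g \<Longrightarrow>
   pd k (\<lambda>x. c * (x k ^ n * g x)) = (\<lambda>x. c * (real n * x k ^ (n - 1) * g x))"
  by (simp add: pd_cmult pd_mult pd_pow pd_var pd_indep pf_mult pf_pow pf_var)

lemma bessel_term: "(y::real) * (w * real i * (real (i-1) * y^(i-1-1) * G)) + \<beta> * (w * real i * (y^(i-1) * G))
   = w * (real i * (real i - 1 + \<beta>)) * (y^(i-1) * G)"
proof (cases i)
  case 0 then show ?thesis by simp
next
  case (Suc j)
  then show ?thesis
  proof (cases j)
    case 0 then show ?thesis using Suc by simp
  next
    case (Suc l)
    then show ?thesis using \<open>i = Suc j\<close> by (simp add: algebra_simps)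
  qed
qed

lemma telesc:
  fixes e h :: "nat \<Rightarrow> real"
  assumes "\<And>k. h (Suc k) = - e k" "h 0 = 0" "e a = 0"
  shows "(\<Sum>i\<le>a. e i) + (\<Sum>i\<le>a. h i) = 0"
proof (cases a)
  case 0 then show ?thesis using assms by simp
next
  case (Suc b)
  have "(\<Sum>i\<le>a. h i) = - (\<Sum>i\<le>b. e i)"
    unfolding Suc sum.atMost_Suc_shift using assms(1,2) by (simp add: sum_negf)
  moreover have "(\<Sum>i\<le>a. e i) = (\<Sum>i\<le>b. e i)" using assms(3) Suc by simp
  ultimately show ?thesis by simp
qed

lemma step:
  fixes H :: "(nat \<Rightarrow> real) \<Rightarrow> real"
  assumes H: "hom m D H" and L0: "Lminus \<nu> m H = (\<lambda>x. 0)" and ind: "\<And>k. k > m \<Longrightarrow> indep k H"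
    and nu: "\<nu> (Suc m) > 0" and ad: "a \<le> d"
    and \<gamma>_def: "\<gamma> = 2 * (\<Sum>i=1..m. \<nu> i) + 2 * D" and \<beta>_def: "\<beta> = 2 * \<nu> (Suc m)"
    and g_def: "g = (\<lambda>i x. cc a \<gamma> i * (Lplus m x ^ (a - i) * H x))"
    and T_def: "T = (\<lambda>x. \<Sum>i\<le>a. ww \<beta> i * (x (Suc m) ^ i * g i x))"
  shows "CK \<nu> (Suc m) d (\<lambda>x. Lplus m x ^ a * H x) = T"
    and "hom (Suc m) (D + real a) T"
    and "Lminus \<nu> (Suc m) T = (\<lambda>x. 0)"
    and "\<And>k. k > Suc m \<Longrightarrow> indep k T"
    and "\<And>x. T x = H x * (\<Sum>i\<le>a. ww \<beta> i * x (Suc m) ^ i * cc a \<gamma> i * Lplus m x ^ (a - i))"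
proof -
  have pH: "poly_fun H" using H by (simp add: hom_def)
  have pg: "poly_fun (g i)" for i
    unfolding g_def by (intro pf_cmult pf_mult pf_pow pf_Lplus pH)
  have ig: "indep k (g i)" if "k > m" for i k
    unfolding g_def using that by (intro indep_cmult indep_mult indep_pow indep_Lplus ind)
  have bpos: "\<beta> > 0" using nu by (simp add: \<beta>_def)
  have G: "(Lminus \<nu> m ^^ i) (\<lambda>x. Lplus m x ^ a * H x) = g i" for i
  proof (induction i)
    case 0 then show ?case by (simp add: g_def cc_def)
  next
    case (Suc i)
    have "(Lminus \<nu> m ^^ Suc i) (\<lambda>x. Lplus m x ^ a * H x) = Lminus \<nu> m (g i)" using Suc by simp
    also have "\<dots> = (\<lambda>x. cc a \<gamma> i * Lminus \<nu> m (\<lambda>x. Lplus m x ^ (a - i) * H x) x)"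
      unfolding g_def by (intro Lminus_cmult pf_mult pf_pow pf_Lplus pH)
    also have "\<dots> = (\<lambda>x. cc a \<gamma> i * (real (a - i) * (real (a - i) - 1 + \<gamma>) * Lplus m x ^ (a - i - 1) * H x))"
      unfolding Lminus_LH[OF H L0] \<gamma>_def ..
    also have "\<dots> = g (Suc i)"
    proof (cases "i < a")
      case True
      then have "real (a - i) = real a - real i" by simp
      moreover have "cc a \<gamma> (Suc i) = cc a \<gamma> i * ((real a - real i) * (real a - real i - 1 + \<gamma>))"
        by (simp add: cc_def)
      moreover have "a - i - 1 = a - Suc i" by simp
      ultimately show ?thesis unfolding g_def by (simp only: mult.assoc)
    next
      case False
      then show ?thesis unfolding g_def using cc_zero[of a "Suc i" \<gamma>] by simp
    qed
    finally show ?case .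
  qed
  have LG: "Lminus \<nu> m (g i) = g (Suc i)" for i
    using G[of "Suc i"] G[of i] by simp
  have gz: "g i = (\<lambda>x. 0)" if "i > a" for i
    unfolding g_def using cc_zero[OF that] by simp
  have W: "((\<lambda>f y. - y (Suc m) * Lminus \<nu> m f y) ^^ i) (\<lambda>x. Lplus m x ^ a * H x)
     = (\<lambda>x. (- x (Suc m)) ^ i * g i x)" for i
  proof (induction i)
    case 0 then show ?case using G[of 0] by simp
  next
    case (Suc i)
    have "Lminus \<nu> m (\<lambda>x. (- x (Suc m)) ^ i * g i x) = (\<lambda>x. (- x (Suc m)) ^ i * Lminus \<nu> m (g i) x)"
      by (intro Lminus_mult_indep pf_pow pf_neg_var pg) (simp add: indep_def)
    then show ?case using Suc by (simp add: LG mult.assoc)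
  qed
  show CK: "CK \<nu> (Suc m) d (\<lambda>x. Lplus m x ^ a * H x) = T"
  proof
    fix x
    have alg: "\<And>(Gb::real) y i G F Gi. Gb * ((- y) ^ i * G / (F * Gi)) = Gb * (-1) ^ i / (F * Gi) * (y ^ i * G)"
      by (subst power_minus) (simp add: mult_ac)
    have "CK \<nu> (Suc m) d (\<lambda>x. Lplus m x ^ a * H x) x
       = Gamma \<beta> * (\<Sum>i=0..d. ((\<lambda>f y. - y (Suc m) * Lminus \<nu> m f y) ^^ i) (\<lambda>x. Lplus m x ^ a * H x) x
            / (fact i * Gamma (real i + \<beta>)))"
      by (simp add: CK_def \<beta>_def)
    also have "\<dots> = (\<Sum>i=0..d. ww \<beta> i * (x (Suc m) ^ i * g i x))"
      unfolding W sum_distrib_left ww_def alg ..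
    also have "\<dots> = (\<Sum>i\<le>a. ww \<beta> i * (x (Suc m) ^ i * g i x))"
      using ad gz by (intro sum.mono_neutral_right) auto
    finally show "CK \<nu> (Suc m) d (\<lambda>x. Lplus m x ^ a * H x) x = T x" by (simp add: T_def)
  qed
  have homg: "hom (Suc m) (real (a - i) * 1 + D) (g i)" for i
    unfolding g_def
    by (intro hom_cmult hom_mult hom_pow hom_Suc hom_Lplus indep_Lplus H ind) auto
  show "hom (Suc m) (D + real a) T"
    unfolding T_def
  proof (intro hom_sum)
    fix i assume i: "i \<in> {..a}"
    have "hom (Suc m) (real i * 1 + (real (a - i) * 1 + D)) (\<lambda>x. ww \<beta> i * (x (Suc m) ^ i * g i x))"
      by (intro hom_cmult hom_mult hom_pow homg hom_var) auto
    then show "hom (Suc m) (D + real a) (\<lambda>x. ww \<beta> i * (x (Suc m) ^ i * g i x))"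
      by (rule hom_deg) (use i in auto)
  qed simp
  show "indep k T" if "k > Suc m" for k
    unfolding T_def using that by (intro indep_sum indep_cmult indep_mult indep_pow indep_var ig) auto
  show "T x = H x * (\<Sum>i\<le>a. ww \<beta> i * x (Suc m) ^ i * cc a \<gamma> i * Lplus m x ^ (a - i))" for x
  proof -
    have e: "\<And>w Y c P h::real. w * (Y * (c * (P * h))) = h * (w * Y * c * P)" by (simp add: mult_ac)
    show ?thesis unfolding T_def g_def sum_distrib_left e ..
  qed
  show "Lminus \<nu> (Suc m) T = (\<lambda>x. 0)"
  proof
    fix x :: "nat \<Rightarrow> real"
    let ?k = "Suc m"
    let ?y = "x ?k"
    have pt: "poly_fun (\<lambda>x. ww \<beta> i * (x ?k ^ i * g i x))" for i
      by (intro pf_cmult pf_mult pf_pow pf_var pg)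
    have igk: "indep ?k (g i)" for i using ig by simp
    have La: "Lminus \<nu> m T = (\<lambda>x. \<Sum>i\<le>a. ww \<beta> i * (x ?k ^ i * g (Suc i) x))"
    proof -
      have "Lminus \<nu> m T = (\<lambda>x. \<Sum>i\<le>a. Lminus \<nu> m (\<lambda>x. ww \<beta> i * (x ?k ^ i * g i x)) x)"
        unfolding T_def by (rule Lminus_sum) (auto intro: pt)
      also have "\<dots> = (\<lambda>x. \<Sum>i\<le>a. ww \<beta> i * (x ?k ^ i * g (Suc i) x))"
      proof (intro ext sum.cong refl)
        fix i z
        have "Lminus \<nu> m (\<lambda>x. ww \<beta> i * (x ?k ^ i * g i x)) = (\<lambda>x. ww \<beta> i * Lminus \<nu> m (\<lambda>x. x ?k ^ i * g i x) x)"
          by (intro Lminus_cmult pf_mult pf_pow pf_var pg)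
        also have "\<dots> = (\<lambda>x. ww \<beta> i * (x ?k ^ i * Lminus \<nu> m (g i) x))"
          by (subst Lminus_mult_indep) (auto intro: pf_pow pf_var pg simp: indep_def)
        finally show "Lminus \<nu> m (\<lambda>x. ww \<beta> i * (x ?k ^ i * g i x)) z = ww \<beta> i * (z ?k ^ i * g (Suc i) z)"
          by (simp add: LG)
      qed
      finally show ?thesis .
    qed
    have e1: "\<And>w r X G::real. w * (r * X * G) = (w * r) * (X * G)" by (simp add: mult_ac)
    have Pb: "pd ?k T = (\<lambda>x. \<Sum>i\<le>a. (ww \<beta> i * real i) * (x ?k ^ (i - 1) * g i x))"
    proof -
      have "pd ?k T = (\<lambda>x. \<Sum>i\<le>a. pd ?k (\<lambda>x. ww \<beta> i * (x ?k ^ i * g i x)) x)"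
        unfolding T_def by (rule pd_sum) (auto intro: pt)
      also have "\<dots> = (\<lambda>x. \<Sum>i\<le>a. (ww \<beta> i * real i) * (x ?k ^ (i - 1) * g i x))"
        unfolding pd_ypow[OF pg igk] e1 ..
      finally show ?thesis .
    qed
    have Pc: "pd ?k (pd ?k T) = (\<lambda>x. \<Sum>i\<le>a. (ww \<beta> i * real i) * (real (i - 1) * x ?k ^ (i - 1 - 1) * g i x))"
    proof -
      have "pd ?k (pd ?k T) = (\<lambda>x. \<Sum>i\<le>a. pd ?k (\<lambda>x. (ww \<beta> i * real i) * (x ?k ^ (i - 1) * g i x)) x)"
        unfolding Pb by (rule pd_sum, simp, intro pf_cmult pf_mult pf_pow pf_var pg)
      also have "\<dots> = (\<lambda>x. \<Sum>i\<le>a. (ww \<beta> i * real i) * (real (i - 1) * x ?k ^ (i - 1 - 1) * g i x))"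
        unfolding pd_ypow[OF pg igk] ..
      finally show ?thesis .
    qed
    have "Lminus \<nu> (Suc m) T x = (\<Sum>i\<le>a. ww \<beta> i * (?y ^ i * g (Suc i) x))
       + (?y * (\<Sum>i\<le>a. (ww \<beta> i * real i) * (real (i - 1) * ?y ^ (i - 1 - 1) * g i x))
          + \<beta> * (\<Sum>i\<le>a. (ww \<beta> i * real i) * (?y ^ (i - 1) * g i x)))"
      unfolding Lminus_Suc unfolding Pc unfolding Pb La \<beta>_def by simp
    also have "?y * (\<Sum>i\<le>a. (ww \<beta> i * real i) * (real (i - 1) * ?y ^ (i - 1 - 1) * g i x))
          + \<beta> * (\<Sum>i\<le>a. (ww \<beta> i * real i) * (?y ^ (i - 1) * g i x))
        = (\<Sum>i\<le>a. ww \<beta> i * (real i * (real i - 1 + \<beta>)) * (?y ^ (i - 1) * g i x))"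
      unfolding sum_distrib_left sum.distrib[symmetric] bessel_term ..
    also have "(\<Sum>i\<le>a. ww \<beta> i * (?y ^ i * g (Suc i) x))
       + (\<Sum>i\<le>a. ww \<beta> i * (real i * (real i - 1 + \<beta>)) * (?y ^ (i - 1) * g i x)) = 0"
    proof (rule telesc)
      fix k
      show "ww \<beta> (Suc k) * (real (Suc k) * (real (Suc k) - 1 + \<beta>)) * (?y ^ (Suc k - 1) * g (Suc k) x)
          = - (ww \<beta> k * (?y ^ k * g (Suc k) x))"
        unfolding ww_rec[OF bpos] by simp
    next
      show "ww \<beta> a * (?y ^ a * g (Suc a) x) = 0" using gz[of "Suc a"] by simp
    qed simp
    finally show "Lminus \<nu> (Suc m) T x = 0" .
  qed
qed



definition fac :: "(nat \<Rightarrow> real) \<Rightarrow> (nat \<Rightarrow> nat) \<Rightarrow> nat \<Rightarrow> (nat \<Rightarrow> real) \<Rightarrow> real" where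
  "fac \<nu> j k x = (-1) ^ j k * fact (j k) * Gamma (2 * \<nu> (k + 1)) / Gamma (2 * \<nu> (k + 1) + real (j k))
        * jacobiHom (j k) (alphaBG \<nu> j k) (2 * \<nu> (k + 1) - 1) (x (k + 1) - Lplus k x) (Lplus (k + 1) x)"

lemma main_ind:
  assumes "\<forall>i\<in>{1..Suc k}. \<nu> i > 0"
  shows "hom (Suc k) (real (\<Sum>l=1..k. j l)) (psiAux \<nu> j k) \<and> Lminus \<nu> (Suc k) (psiAux \<nu> j k) = (\<lambda>x. 0)
    \<and> (\<forall>kk > Suc k. indep kk (psiAux \<nu> j k)) \<and> psiAux \<nu> j k = (\<lambda>x. \<Prod>l=1..k. fac \<nu> j l x)"
  using assms
proof (induction k)
  case 0
  have "hom (Suc 0) 0 (\<lambda>x. 1)" by (rule hom_const)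
  moreover have "Lminus \<nu> (Suc 0) (\<lambda>x. 1) = (\<lambda>x. 0)" by (simp add: Lminus_def pd_const)
  ultimately show ?case by (simp add: indep_const)
next
  case (Suc k)
  define m where "m = Suc k"
  define H where "H = psiAux \<nu> j k"
  define D where "D = real (\<Sum>l=1..k. j l)"
  define a where "a = j m"
  define d where "d = (\<Sum>l=1..m. j l)"
  define \<gamma> where "\<gamma> = 2 * (\<Sum>i=1..m. \<nu> i) + 2 * D"
  define \<beta> where "\<beta> = 2 * \<nu> (Suc m)"
  define g where "g = (\<lambda>i x. cc a \<gamma> i * (Lplus m x ^ (a - i) * H x))"
  define T where "T = (\<lambda>x. \<Sum>i\<le>a. ww \<beta> i * (x (Suc m) ^ i * g i x))"
  have IH: "hom m D H \<and> Lminus \<nu> m H = (\<lambda>x. 0) \<and> (\<forall>kk > m. indep kk H) \<and> H = (\<lambda>x. \<Prod>l=1..k. fac \<nu> j l x)"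
    using Suc unfolding m_def H_def D_def by auto
  have nu: "\<nu> (Suc m) > 0" using Suc.prems m_def by auto
  have ad: "a \<le> d" unfolding a_def d_def m_def by (rule member_le_sum) auto
  note S = step[OF conjunct1[OF IH] conjunct1[OF conjunct2[OF IH]] _ nu ad \<gamma>_def \<beta>_def g_def T_def]
  have ind: "\<And>kk. kk > m \<Longrightarrow> indep kk H" using IH by auto
  have psi: "psiAux \<nu> j (Suc k) = T"
  proof -
    have "psiAux \<nu> j (Suc k) = CK \<nu> (Suc m) d (\<lambda>x. Lplus m x ^ a * H x)"
      by (simp add: m_def d_def a_def H_def)
    then show ?thesis using S(1)[OF ind] by simp
  qed
  have Dsum: "D + real a = real (\<Sum>l=1..Suc k. j l)"
    unfolding D_def a_def m_def by simp
  have fac_eq: "(\<Sum>i\<le>a. ww \<beta> i * x (Suc m) ^ i * cc a \<gamma> i * Lplus m x ^ (a - i)) = fac \<nu> j m x" for x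
  proof -
    have bp: "\<beta> > 0" using nu \<beta>_def by simp
    have al: "alphaBG \<nu> j m = \<gamma> - 1"
      unfolding alphaBG_def \<gamma>_def D_def m_def by (simp add: of_nat_sum)
    have Lp: "Lplus (m + 1) x = Lplus m x + x (Suc m)" using Lplus_Suc by simp
    show ?thesis
      unfolding jac_sum[OF bp] fac_def al Lp
      by (simp add: a_def \<beta>_def add.commute)
  qed
  have "hom (Suc m) (D + real a) T" "Lminus \<nu> (Suc m) T = (\<lambda>x. 0)" "\<And>kk. kk > Suc m \<Longrightarrow> indep kk T"
    using S(2-4)[OF ind] by auto
  moreover have "T = (\<lambda>x. \<Prod>l=1..Suc k. fac \<nu> j l x)"
  proof
    fix x
    have "T x = H x * fac \<nu> j m x" using S(5)[OF ind, of x] fac_eq by simp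
    then show "T x = (\<Prod>l=1..Suc k. fac \<nu> j l x)" using IH by (simp add: m_def)
  qed
  ultimately show ?case unfolding psi Dsum[symmetric] m_def by simp
qed

theorem mainTheorem6:
  fixes n :: nat and \<nu> :: "nat \<Rightarrow> real" and j :: "nat \<Rightarrow> nat"
  assumes "n \<ge> 2" and "\<forall>i\<in>{1..n}. \<nu> i > 0"
  shows "psiBG \<nu> j n =
    (\<lambda>x. \<Prod>k=1..n-1. (-1) ^ j k * fact (j k) * Gamma (2 * \<nu> (k + 1)) / Gamma (2 * \<nu> (k + 1) + real (j k))
        * jacobiHom (j k) (alphaBG \<nu> j k) (2 * \<nu> (k + 1) - 1) (x (k + 1) - Lplus k x) (Lplus (k + 1) x))"
proof -
  have n: "Suc (n - 1) = n" using assms(1) by simp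
  have "psiAux \<nu> j (n - 1) = (\<lambda>x. \<Prod>l=1..n-1. fac \<nu> j l x)"
    using main_ind[of "n - 1" \<nu> j] assms(2) n by simp
  then show ?thesis unfolding psiBG_def fac_def .
qed

end
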